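(* For integers $m\ge1$ and $k\ge0$, $$\mu(N|_m,k,J)=\mu(P|_m,k,L)\qquad\text{and}\qquad \mu(P|_m,k,J^{*})=\mu(Q|_m,k,J^{*}).$$
   Context: Let $N=\{0,1,2,\ldots\}$, $J=\{(2n+1)2^{2k}-1 : n,k\in N\}$, $J^{*}=\{(2n+1)2^{2k}-1 : n,k\in N,\ k>0\}$, $K=N\setminus J$, $L=N\setminus J^{*}$, $P=\{k\in N: k\equiv0,3\pmod 4\}$, $Q=\{k\in N: k\equiv 1,2\pmod 4\}$. For an infinite set $A\subseteq N$, $A|_m$ denotes the set of the $m$ smallest elements of $A$. An involution on a finite set $A$ is a permutation $\sigma$ of $A$ with $\sigma=\sigma^{-1}$; its cycles are fixed points and transpositions $(c,d)$. A transposition $(c,d)$ is said to be in a set $B$ if $c+d\in B$. For a finite set $A\subseteq N$, an integer $k\ge0$ and a set $B\subseteq N$, $\mu(A,k,B)$ denotes the number of involutions of $A$ having exactly $k$ transpositions, all of which are in $B$. *)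

theory Defs
  imports "HOL-Combinatorics.Permutations"
begin

definition Jset :: "nat set" where
  "Jset = {x. \<exists>n k. x = (2*n+1) * 2^(2*k) - 1}"

definition Jstar :: "nat set" where
  "Jstar = {x. \<exists>n k. k > 0 \<and> x = (2*n+1) * 2^(2*k) - 1}"

definition Kset :: "nat set" where
  "Kset = UNIV - Jset"

definition Lset :: "nat set" where
  "Lset = UNIV - Jstar"

definition Pset :: "nat set" where
  "Pset = {k. k mod 4 = 0 \<or> k mod 4 = 3}"

definition Qset :: "nat set" where
  "Qset = {k. k mod 4 = 1 \<or> k mod 4 = 2}"

text \<open>A|_m: the set of the m smallest elements of A (A infinite).\<close>
definition first_m :: "nat set \<Rightarrow> nat \<Rightarrow> nat set" where
  "first_m A m = {x \<in> A. card {y \<in> A. y < x} < m}"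

definition involution_on :: "(nat \<Rightarrow> nat) \<Rightarrow> nat set \<Rightarrow> bool" where
  "involution_on \<sigma> A \<longleftrightarrow> \<sigma> permutes A \<and> (\<forall>x. \<sigma> (\<sigma> x) = x)"

definition transpositions :: "(nat \<Rightarrow> nat) \<Rightarrow> nat set \<Rightarrow> nat set set" where
  "transpositions \<sigma> A = {{c, \<sigma> c} | c. c \<in> A \<and> \<sigma> c \<noteq> c}"

definition mu :: "nat set \<Rightarrow> nat \<Rightarrow> nat set \<Rightarrow> nat" where
  "mu A k B = card {\<sigma>. involution_on \<sigma> A \<and> card (transpositions \<sigma> A) = k \<and>
      (\<forall>c \<in> A. \<sigma> c \<noteq> c \<longrightarrow> c + \<sigma> c \<in> B)}"

end

theory Submission
  imports Defs
begin

lemma mu_le: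
  fixes f :: "nat \<Rightarrow> nat"
  assumes fin: "finite A" and inj: "inj_on f A"
    and cond: "\<And>a b. a \<in> A \<Longrightarrow> b \<in> A \<Longrightarrow> a \<noteq> b \<Longrightarrow> a + b \<in> X \<Longrightarrow> f a + f b \<in> Y"
  shows "mu A k X \<le> mu (f ` A) k Y"
proof -
  define B where "B = f ` A"
  define g where "g = inv_into A f"
  have gf: "\<And>a. a \<in> A \<Longrightarrow> g (f a) = a" unfolding g_def using inj by (simp add: inv_into_f_f)
  define cj where "cj \<sigma> = (\<lambda>x. if x \<in> B then f (\<sigma> (g x)) else x)" for \<sigma> :: "nat \<Rightarrow> nat"
  define S1 where "S1 = {\<sigma>. involution_on \<sigma> A \<and> card (transpositions \<sigma> A) = k \<and>
      (\<forall>c \<in> A. \<sigma> c \<noteq> c \<longrightarrow> c + \<sigma> c \<in> X)}"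
  define S2 where "S2 = {\<sigma>. involution_on \<sigma> B \<and> card (transpositions \<sigma> B) = k \<and>
      (\<forall>c \<in> B. \<sigma> c \<noteq> c \<longrightarrow> c + \<sigma> c \<in> Y)}"
  have fB: "finite B" using fin B_def by simp
  have finS2: "finite S2"
    by (rule finite_subset[OF _ finite_permutations[OF fB]]) (auto simp: S2_def involution_on_def)
  have cjfa: "\<And>\<sigma> a. a \<in> A \<Longrightarrow> cj \<sigma> (f a) = f (\<sigma> a)"
    using gf by (simp add: cj_def B_def)
  have injS1: "inj_on cj S1"
  proof (rule inj_onI)
    fix \<sigma> \<tau> assume s: "\<sigma> \<in> S1" and t: "\<tau> \<in> S1" and e: "cj \<sigma> = cj \<tau>"
    have ps: "\<sigma> permutes A" and pt: "\<tau> permutes A" using s t by (auto simp: S1_def involution_on_def)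
    show "\<sigma> = \<tau>"
    proof
      fix x
      show "\<sigma> x = \<tau> x"
      proof (cases "x \<in> A")
        case True
        have "f (\<sigma> x) = f (\<tau> x)" using cjfa[OF True] e by metis
        moreover have "\<sigma> x \<in> A" "\<tau> x \<in> A" using ps pt True by (auto simp: permutes_in_image)
        ultimately show ?thesis using inj by (meson inj_onD)
      next
        case False then show ?thesis using ps pt by (simp add: permutes_not_in)
      qed
    qed
  qed
  have sub: "cj ` S1 \<subseteq> S2"
  proof
    fix \<rho> assume "\<rho> \<in> cj ` S1"
    then obtain \<sigma> where s: "\<sigma> \<in> S1" and r: "\<rho> = cj \<sigma>" by auto
    have ps: "\<sigma> permutes A" and inv: "\<And>x. \<sigma> (\<sigma> x) = x" and ct: "card (transpositions \<sigma> A) = k"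
      and cX: "\<forall>c \<in> A. \<sigma> c \<noteq> c \<longrightarrow> c + \<sigma> c \<in> X"
      using s by (auto simp: S1_def involution_on_def)
    have sA: "\<And>a. a \<in> A \<Longrightarrow> \<sigma> a \<in> A" using ps by (simp add: permutes_in_image)
    have rr: "\<rho> (\<rho> x) = x" for x
    proof (cases "x \<in> B")
      case True
      then obtain a where a: "a \<in> A" "x = f a" by (auto simp: B_def)
      then show ?thesis using r cjfa sA inv by simp
    next
      case False then show ?thesis by (simp add: r cj_def)
    qed
    have pr: "\<rho> permutes B"
      unfolding permutes_def
    proof (intro conjI allI impI)
      fix x assume "x \<notin> B" then show "\<rho> x = x" by (simp add: r cj_def)
    next
      fix y show "\<exists>!x. \<rho> x = y"
        by (metis rr)
    qed
    have tr: "transpositions \<rho> B = image f ` transpositions \<sigma> A"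
    proof
      show "transpositions \<rho> B \<subseteq> image f ` transpositions \<sigma> A"
      proof
        fix T assume "T \<in> transpositions \<rho> B"
        then obtain c where c: "c \<in> B" "\<rho> c \<noteq> c" "T = {c, \<rho> c}" by (auto simp: transpositions_def)
        then obtain a where a: "a \<in> A" "c = f a" by (auto simp: B_def)
        have "\<sigma> a \<noteq> a" using c a r cjfa by auto
        moreover have "T = f ` {a, \<sigma> a}" using c a r cjfa by auto
        moreover have "{a, \<sigma> a} \<in> transpositions \<sigma> A" using a calculation unfolding transpositions_def by blast
        ultimately show "T \<in> image f ` transpositions \<sigma> A" by blast
      qed
    next
      show "image f ` transpositions \<sigma> A \<subseteq> transpositions \<rho> B"
      proof
        fix T assume "T \<in> image f ` transpositions \<sigma> A"
        then obtain a where a: "a \<in> A" "\<sigma> a \<noteq> a" "T = f ` {a, \<sigma> a}" by (auto simp: transpositions_def)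
        have "f (\<sigma> a) \<noteq> f a" using a sA inj by (meson inj_onD)
        then have "\<rho> (f a) \<noteq> f a" "T = {f a, \<rho> (f a)}" using a r cjfa by auto
        moreover have "f a \<in> B" using a B_def by auto
        ultimately show "T \<in> transpositions \<rho> B" unfolding transpositions_def by blast
      qed
    qed
    have "transpositions \<sigma> A \<subseteq> Pow A" using sA by (auto simp: transpositions_def)
    then have "inj_on (image f) (transpositions \<sigma> A)"
      using inj_on_image_Pow[OF inj] inj_on_subset by blast
    then have ct2: "card (transpositions \<rho> B) = k" using tr ct by (simp add: card_image)
    have cY: "\<forall>c \<in> B. \<rho> c \<noteq> c \<longrightarrow> c + \<rho> c \<in> Y"
    proof (intro ballI impI)
      fix c assume c: "c \<in> B" "\<rho> c \<noteq> c"
      then obtain a where a: "a \<in> A" "c = f a" by (auto simp: B_def)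
      have ne: "\<sigma> a \<noteq> a" using c a r cjfa by auto
      then have "a + \<sigma> a \<in> X" using cX a by auto
      then have "f a + f (\<sigma> a) \<in> Y" using cond a sA ne by auto
      then show "c + \<rho> c \<in> Y" using a r cjfa by auto
    qed
    show "\<rho> \<in> S2" using pr rr ct2 cY by (auto simp: S2_def involution_on_def)
  qed
  have "card S1 \<le> card S2" using card_inj_on_le[OF injS1 sub finS2] .
  then show ?thesis by (simp add: mu_def S1_def S2_def B_def)
qed

lemma mu_eq:
  fixes f :: "nat \<Rightarrow> nat"
  assumes fin: "finite A" and inj: "inj_on f A"
    and cond: "\<And>a b. a \<in> A \<Longrightarrow> b \<in> A \<Longrightarrow> a \<noteq> b \<Longrightarrow> a + b \<in> X \<longleftrightarrow> f a + f b \<in> Y"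
  shows "mu A k X = mu (f ` A) k Y"
proof (rule antisym)
  show "mu A k X \<le> mu (f ` A) k Y" using mu_le[OF fin inj] cond by blast
  define g where "g = inv_into A f"
  have inj2: "inj_on g (f ` A)" unfolding g_def by (simp add: inj_on_inv_into)
  have im: "g ` f ` A = A" unfolding g_def using inj by (simp add: inv_into_image_cancel)
  have gf: "\<And>a. a \<in> A \<Longrightarrow> g (f a) = a" unfolding g_def using inj by (simp add: inv_into_f_f)
  have "mu (f ` A) k Y \<le> mu (g ` f ` A) k X"
  proof (rule mu_le[OF _ inj2])
    show "finite (f ` A)" using fin by simp
  next
    fix c d assume "c \<in> f ` A" "d \<in> f ` A" "c \<noteq> d" "c + d \<in> Y"
    then obtain a b where ab: "a \<in> A" "b \<in> A" "c = f a" "d = f b" "f a + f b \<in> Y" by auto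
    then have "a \<noteq> b" using \<open>c \<noteq> d\<close> by auto
    then show "g c + g d \<in> X" using cond gf ab by auto
  qed
  then show "mu (f ` A) k Y \<le> mu A k X" using im by simp
qed

lemma first_m_range:
  assumes sm: "strict_mono h"
  shows "first_m (range h) m = h ` {..<m}"
proof -
  have c: "card {y \<in> range h. y < h i} = i" for i
  proof -
    have "{y \<in> range h. y < h i} = h ` {..<i}"
      using sm by (auto simp: strict_mono_less)
    then show ?thesis using strict_mono_imp_inj_on[OF sm]
      by (simp add: card_image inj_on_subset)
  qed
  show ?thesis unfolding first_m_def using c by auto
qed

lemma odd_decomp: "y > 0 \<Longrightarrow> \<exists>a i. (y::nat) = (2*a+1)*2^i"
proof (induction y rule: less_induct)
  case (less y)
  show ?case
  proof (cases "even y")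
    case True
    then obtain z where z: "y = 2*z" by auto
    with less.prems have "z < y" "z > 0" by auto
    then obtain a i where "z = (2*a+1)*2^i" using less.IH by blast
    then have "y = (2*a+1)*2^(Suc i)" using z by simp
    then show ?thesis by blast
  next
    case False
    then obtain a where "y = 2*a+1" using oddE by blast
    then have "y = (2*a+1)*2^0" by simp
    then show ?thesis by blast
  qed
qed

lemma uniq_aux: "(2*a+1)*2^i = (2*b+1)*(2::nat)^j \<Longrightarrow> i < j \<Longrightarrow> False"
proof -
  assume e: "(2*a+1)*2^i = (2*b+1)*(2::nat)^j" and l: "i < j"
  have "(2::nat)^j = 2^i * 2^(j-i)" using l by (simp flip: power_add)
  then have "(2*a+1)*2^i = ((2*b+1)*2^(j-i))*(2::nat)^i" using e by (simp add: ac_simps)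
  then have "2*a+1 = (2*b+1)*2^(j-i)" by (metis mult_right_cancel power_not_zero zero_neq_numeral)
  moreover obtain d where d: "j - i = Suc d" using l by (cases "j-i") auto
  ultimately have "2*a+1 = 2*((2*b+1)*(2::nat)^d)" by simp
  then have "(2*a+1) mod 2 = (2*((2*b+1)*(2::nat)^d)) mod 2" by simp
  then show False by simp
qed

lemma uniq: "(2*a+1)*2^i = (2*b+1)*(2::nat)^j \<Longrightarrow> i = j"
  using uniq_aux[of a i b j] uniq_aux[of b j a i] by (metis linorder_neqE_nat)

lemma J_iff: "x \<in> Jset \<longleftrightarrow> (\<exists>n k. x + 1 = (2*n+1)*2^(2*k))"
proof -
  have "(2*n+1)*2^(2*k) \<ge> (1::nat)" for n k
  proof -
    have "0 < (2*n+1)*(2::nat)^(2*k)" by simp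
    then show ?thesis by linarith
  qed
  then have h: "\<And>n k. x = (2*n+1)*2^(2*k) - 1 \<longleftrightarrow> x+1 = (2*n+1)*2^(2*k)"
    by (metis add_diff_cancel_right' le_add_diff_inverse2)
  show ?thesis unfolding Jset_def by (simp only: mem_Collect_eq h)
qed

lemma Js_iff: "x \<in> Jstar \<longleftrightarrow> (\<exists>n k. k > 0 \<and> x + 1 = (2*n+1)*2^(2*k))"
proof -
  have "(2*n+1)*2^(2*k) \<ge> (1::nat)" for n k
  proof -
    have "0 < (2*n+1)*(2::nat)^(2*k)" by simp
    then show ?thesis by linarith
  qed
  then have h: "\<And>n k. x = (2*n+1)*2^(2*k) - 1 \<longleftrightarrow> x+1 = (2*n+1)*2^(2*k)"
    by (metis add_diff_cancel_right' le_add_diff_inverse2)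
  show ?thesis unfolding Jstar_def by (simp only: mem_Collect_eq h)
qed

lemma even_notJs: "even x \<Longrightarrow> x \<notin> Jstar"
proof
  assume "even x" "x \<in> Jstar"
  then obtain n k where "k > 0" "x + 1 = (2*n+1)*2^(2*k)" using Js_iff by blast
  then have "even (x+1)" by simp
  with \<open>even x\<close> show False by simp
qed

lemma key: "s \<in> Jset \<longleftrightarrow> 2*s+1 \<notin> Jstar"
proof
  assume "s \<in> Jset"
  then obtain n k where nk: "s + 1 = (2*n+1)*2^(2*k)" using J_iff by blast
  show "2*s+1 \<notin> Jstar"
  proof
    assume "2*s+1 \<in> Jstar"
    then obtain n' k' where "k' > 0" "2*s+1+1 = (2*n'+1)*2^(2*k')" using Js_iff by blast
    moreover have "2*s+1+1 = (2*n+1)*2^(Suc (2*k))" using nk by simp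
    ultimately have "Suc (2*k) = 2*k'" using uniq by metis
    then show False by presburger
  qed
next
  assume a: "2*s+1 \<notin> Jstar"
  obtain b i where bi: "s+1 = (2*b+1)*2^i" using odd_decomp[of "s+1"] by auto
  show "s \<in> Jset"
  proof (cases "even i")
    case True
    then obtain k where "i = 2*k" by auto
    then show ?thesis using bi J_iff by blast
  next
    case False
    then obtain k where k: "i = 2*k+1" using oddE by blast
    have "2*s+1+1 = (2*b+1)*2^(2*(Suc k))" using bi k by simp
    then have "2*s+1 \<in> Jstar" using Js_iff by blast
    with a show ?thesis by simp
  qed
qed

definition pp :: "nat \<Rightarrow> nat" where "pp i = 2*i + i mod 2"
definition qq :: "nat \<Rightarrow> nat" where "qq i = 2*i + 1 - i mod 2"
lemma par: "\<And>i::nat. i mod 2 = 0 \<or> i mod 2 = 1" by auto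
lemma pp1: "a mod 2 \<noteq> b mod 2 \<Longrightarrow> pp a + pp b = 2*(a+b)+1" unfolding pp_def using par[of a] par[of b] by auto
lemma pp2: "a mod 2 = b mod 2 \<Longrightarrow> even (pp a + pp b)" unfolding pp_def using par[of a] par[of b] by auto
lemma pp_mono: "strict_mono pp"
  unfolding strict_mono_Suc_iff pp_def using par by (auto simp: mod_Suc)
lemma qq1: "a mod 2 \<noteq> b mod 2 \<Longrightarrow> qq a + qq b = 2*(a+b)+1" unfolding qq_def using par[of a] par[of b] by auto
lemma qq2: "a mod 2 = b mod 2 \<Longrightarrow> even (qq a + qq b)" unfolding qq_def using par[of a] par[of b] by auto
lemma qq_mono: "strict_mono qq"
  unfolding strict_mono_Suc_iff qq_def using par by (auto simp: mod_Suc)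
lemma ppP: "pp i mod 4 = 0 \<or> pp i mod 4 = 3"
proof -
  obtain t where "i = 2*t \<or> i = 2*t+1" by (metis oddE evenE)
  then show ?thesis unfolding pp_def by auto
qed
lemma qqQ: "qq i mod 4 = 1 \<or> qq i mod 4 = 2"
proof -
  obtain t where "i = 2*t \<or> i = 2*t+1" by (metis oddE evenE)
  then have "qq i = 4*t+1 \<or> qq i = 4*t+2" unfolding qq_def by auto
  moreover have "(4*t+1) mod 4 = (1::nat)" "(4*t+2) mod 4 = (2::nat)" by presburger+
  ultimately show ?thesis by auto
qed
lemma Pex: "x mod 4 = 0 \<or> x mod 4 = 3 \<Longrightarrow> \<exists>i. x = pp i"
proof -
  assume a: "x mod 4 = 0 \<or> x mod 4 = 3"
  have x: "x = 4*(x div 4) + x mod 4" by simp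
  show ?thesis
  proof (cases "x mod 4 = 0")
    case True then have "x = pp (2*(x div 4))" unfolding pp_def using x by simp
    then show ?thesis by blast
  next
    case False then have "x mod 4 = 3" using a by simp
    then have "x = pp (2*(x div 4)+1)" unfolding pp_def using x by simp
    then show ?thesis by blast
  qed
qed
lemma Qex: "x mod 4 = 1 \<or> x mod 4 = 2 \<Longrightarrow> \<exists>i. x = qq i"
proof -
  assume a: "x mod 4 = 1 \<or> x mod 4 = 2"
  have x: "x = 4*(x div 4) + x mod 4" by simp
  show ?thesis
  proof (cases "x mod 4 = 1")
    case True then have "x = qq (2*(x div 4))" unfolding qq_def using x by simp
    then show ?thesis by blast
  next
    case False then have "x mod 4 = 2" using a by simp
    then have "x = qq (2*(x div 4)+1)" unfolding qq_def using x by simp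
    then show ?thesis by blast
  qed
qed
lemma evsum: "(a::nat) mod 2 = b mod 2 \<Longrightarrow> a + b + 1 = (2*((a+b) div 2)+1)*2^(2*0)"
proof -
  assume "(a::nat) mod 2 = b mod 2"
  then have "even (a+b)" by presburger
  then show ?thesis by simp
qed

lemma P_range: "Pset = range pp"
proof (rule set_eqI)
  fix x
  show "x \<in> Pset \<longleftrightarrow> x \<in> range pp"
  proof
    assume "x \<in> Pset"
    then have "x mod 4 = 0 \<or> x mod 4 = 3" unfolding Pset_def by blast
    then have "\<exists>i. x = pp i" by (rule Pex)
    then obtain i where "x = pp i" by blast
    then show "x \<in> range pp" by simp
  next
    assume "x \<in> range pp"
    then obtain i where "x = pp i" by auto
    then show "x \<in> Pset" using ppP[of i] unfolding Pset_def by simp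
  qed
qed

lemma Q_range: "Qset = range qq"
proof (rule set_eqI)
  fix x
  show "x \<in> Qset \<longleftrightarrow> x \<in> range qq"
  proof
    assume "x \<in> Qset"
    then have "x mod 4 = 1 \<or> x mod 4 = 2" unfolding Qset_def by blast
    then have "\<exists>i. x = qq i" by (rule Qex)
    then obtain i where "x = qq i" by blast
    then show "x \<in> range qq" by simp
  next
    assume "x \<in> range qq"
    then obtain i where "x = qq i" by auto
    then show "x \<in> Qset" using qqQ[of i] unfolding Qset_def by simp
  qed
qed

lemma sum_cases:
  fixes f :: "nat \<Rightarrow> nat"
  assumes "a mod 2 \<noteq> b mod 2 \<Longrightarrow> f a + f b = 2*(a+b)+1"
    and "a mod 2 = b mod 2 \<Longrightarrow> even (f a + f b)"
  shows "a + b \<in> {s. odd s \<and> 2*s+1 \<in> Jstar} \<longleftrightarrow> f a + f b \<in> Jstar"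
proof (cases "a mod 2 = b mod 2")
  case True
  then have "even (a+b)" by presburger
  then show ?thesis using assms(2)[OF True] even_notJs by auto
next
  case False
  then have "odd (a+b)" by presburger
  then show ?thesis using assms(1)[OF False] by auto
qed

theorem lemma2p2:
  fixes m k :: nat
  assumes "m \<ge> 1"
  shows "mu (first_m (UNIV :: nat set) m) k Jset = mu (first_m Pset m) k Lset
       \<and> mu (first_m Pset m) k Jstar = mu (first_m Qset m) k Jstar"
proof -
  have U: "first_m (UNIV :: nat set) m = {..<m}"
    using first_m_range[of id m] by (simp add: strict_mono_def)
  have P: "first_m Pset m = pp ` {..<m}" using first_m_range[OF pp_mono] P_range by simp
  have Q: "first_m Qset m = qq ` {..<m}" using first_m_range[OF qq_mono] Q_range by simp
  have ip: "inj_on pp {..<m}" using strict_mono_imp_inj_on[OF pp_mono] inj_on_subset by blast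
  have iq: "inj_on qq {..<m}" using strict_mono_imp_inj_on[OF qq_mono] inj_on_subset by blast
  have c1: "mu {..<m} k Jset = mu (pp ` {..<m}) k Lset"
  proof (rule mu_eq[OF _ ip])
    fix a b :: nat
    show "a + b \<in> Jset \<longleftrightarrow> pp a + pp b \<in> Lset"
    proof (cases "a mod 2 = b mod 2")
      case True
      then obtain n where n: "a + b + 1 = (2*n+1)*2^(2*0)" using evsum by blast
      have "a + b \<in> Jset" using J_iff n by blast
      moreover have "even (pp a + pp b)" using True by (rule pp2)
      ultimately show ?thesis using even_notJs by (simp add: Lset_def)
    next
      case False
      then have "pp a + pp b = 2*(a+b)+1" by (rule pp1)
      then show ?thesis using key by (simp add: Lset_def)
    qed
  qed simp
  have c2: "mu {..<m} k {s. odd s \<and> 2*s+1 \<in> Jstar} = mu (pp ` {..<m}) k Jstar"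
  proof (rule mu_eq[OF _ ip])
    fix a b :: nat
    show "a + b \<in> {s. odd s \<and> 2*s+1 \<in> Jstar} \<longleftrightarrow> pp a + pp b \<in> Jstar"
      by (rule sum_cases[OF pp1 pp2])
  qed simp
  have c3: "mu {..<m} k {s. odd s \<and> 2*s+1 \<in> Jstar} = mu (qq ` {..<m}) k Jstar"
  proof (rule mu_eq[OF _ iq])
    fix a b :: nat
    show "a + b \<in> {s. odd s \<and> 2*s+1 \<in> Jstar} \<longleftrightarrow> qq a + qq b \<in> Jstar"
      by (rule sum_cases[OF qq1 qq2])
  qed simp
  show ?thesis using c1 c2 c3 U P Q by simp
qed

end
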